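(* Let $\alpha,\beta>0$ and $\tau>0$ with $\tau^\alpha<1$. If $A\in\mathcal B(X)$ is a bounded operator on a Banach space $X$ with $\|A\|<1$, then for each $n\in\mathbb N_0$ the series $\sum_{j=0}^\infty k_\tau^{\alpha j+\beta}(n)A^j$ converges in operator norm, and $A$ generates the discrete $(\alpha,\beta)$-resolvent family $\{S_{\alpha,\beta}^n\}_{n\in\mathbb{N}_0}$ given by $$S_{\alpha,\beta}^n=\sum_{j=0}^\infty k_\tau^{\alpha j+\beta}(n)A^j,\qquad n\in\mathbb N_0.$$
   Context: For $\gamma>0$ and $n\in\mathbb{N}_0$ let $k_\tau^\gamma(n):=\frac{\tau^{\gamma-1}\Gamma(\gamma+n)}{\Gamma(\gamma)\Gamma(n+1)}$. For $\alpha,\beta>0$, a sequence $\{S_{\alpha,\beta}^n\}_{n\in\mathbb{N}_0}\subset\mathcal{B}(X)$ is called a discrete $(\alpha,\beta)$-resolvent family generated by the closed operator $A:D(A)\subset X\to X$ if (1) $S^n_{\alpha,\beta}x\in D(A)$ for all $x\in X$, $n\in\mathbb N_0$, and $AS_{\alpha,\beta}^nx=S_{\alpha,\beta}^nAx$ for all $x\in D(A)$, $n\in\mathbb{N}_0$; (2) for every $x\in X$ and $n\in\mathbb{N}_0$, $S_{\alpha,\beta}^nx=k^\beta_\tau(n)x+\tau A\sum_{j=0}^n k^\alpha_\tau(n-j)S_{\alpha,\beta}^jx$. *)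

theory Defs
  imports "HOL-Analysis.Analysis"
begin

definition kt :: "real \<Rightarrow> real \<Rightarrow> nat \<Rightarrow> real" where
  "kt \<tau> \<gamma> n = \<tau> powr (\<gamma> - 1) * Gamma (\<gamma> + real n) / (Gamma \<gamma> * Gamma (real n + 1))"

definition blinfun_pow :: "('a::real_normed_vector \<Rightarrow>\<^sub>L 'a) \<Rightarrow> nat \<Rightarrow> ('a \<Rightarrow>\<^sub>L 'a)" where
  "blinfun_pow A j = ((\<lambda>B. A o\<^sub>L B) ^^ j) id_blinfun"

definition closed_operator :: "'a::real_normed_vector set \<Rightarrow> ('a \<Rightarrow> 'a) \<Rightarrow> bool" where
  "closed_operator D A \<longleftrightarrow> subspace D
     \<and> (\<forall>x\<in>D. \<forall>y\<in>D. A (x + y) = A x + A y)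
     \<and> (\<forall>x\<in>D. \<forall>c::real. A (c *\<^sub>R x) = c *\<^sub>R A x)
     \<and> closed {(x, A x) | x. x \<in> D}"

definition discrete_resolvent_family ::
  "real \<Rightarrow> real \<Rightarrow> real \<Rightarrow> 'a::real_normed_vector set \<Rightarrow> ('a \<Rightarrow> 'a) \<Rightarrow> (nat \<Rightarrow> ('a \<Rightarrow>\<^sub>L 'a)) \<Rightarrow> bool" where
  "discrete_resolvent_family \<tau> \<alpha> \<beta> D A S \<longleftrightarrow>
     closed_operator D A
     \<and> (\<forall>n x. S n x \<in> D)
     \<and> (\<forall>n. \<forall>x\<in>D. A (S n x) = S n (A x))
     \<and> (\<forall>n x. (\<Sum>j\<le>n. kt \<tau> \<alpha> (n - j) *\<^sub>R S j x) \<in> D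
              \<and> S n x = kt \<tau> \<beta> n *\<^sub>R x + \<tau> *\<^sub>R A (\<Sum>j\<le>n. kt \<tau> \<alpha> (n - j) *\<^sub>R S j x))"

end

theory Submission
  imports Defs "HOL-Computational_Algebra.Formal_Power_Series"
begin

lemma kt_eq:
  assumes "\<gamma> > 0"
  shows "kt \<tau> \<gamma> n = \<tau> powr (\<gamma> - 1) * pochhammer \<gamma> n / fact n"
proof -
  have ni: "\<gamma> \<notin> \<int>\<^sub>\<le>\<^sub>0" using assms by (auto elim!: nonpos_Ints_cases)
  have "pochhammer \<gamma> n = Gamma (\<gamma> + real n) / Gamma \<gamma>" using pochhammer_Gamma[OF ni] by simp
  moreover have "Gamma (real n + 1) = fact n" using Gamma_fact[of n, where 'a=real] by (simp add: add.commute)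
  moreover have "Gamma \<gamma> > 0" using assms by (rule Gamma_real_pos)
  ultimately show ?thesis unfolding kt_def by (simp add: field_simps)
qed

lemma poch_conv:
  fixes a b :: real
  shows "(\<Sum>i\<le>n. pochhammer a (n-i) / fact (n-i) * (pochhammer b i / fact i)) = pochhammer (a+b) n / fact n"
proof -
  have e: "pochhammer x k / fact k = (-1)^k * ((-x) gchoose k)" for x :: real and k
    by (simp add: gbinomial_pochhammer)
  have "(\<Sum>i\<le>n. pochhammer a (n-i) / fact (n-i) * (pochhammer b i / fact i))
     = (\<Sum>i\<in>{0..n}. (-1)^n * (((-b) gchoose i) * ((-a) gchoose (n - i))))"
  proof (intro sum.cong)
    fix i assume "i \<in> {0..n}"
    then have "(-1::real)^(n-i) * (-1)^i = (-1)^n" by (simp flip: power_add)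
    then show "pochhammer a (n-i) / fact (n-i) * (pochhammer b i / fact i) = (-1)^n * (((-b) gchoose i) * ((-a) gchoose (n - i)))"
      unfolding e by (metis (no_types, lifting) mult.assoc mult.commute)
  qed (auto simp: atMost_atLeast0)
  also have "\<dots> = (-1)^n * ((-b + -a) gchoose n)"
    by (simp add: sum_distrib_left[symmetric] gbinomial_Vandermonde)
  also have "\<dots> = pochhammer (a+b) n / fact n" by (simp add: e add.commute)
  finally show ?thesis .
qed

lemma kt_conv:
  assumes "\<tau> > 0" "a > 0" "b > 0"
  shows "\<tau> * (\<Sum>i\<le>n. kt \<tau> a (n-i) * kt \<tau> b i) = kt \<tau> (a+b) n"
proof -
  have "\<tau> * (\<Sum>i\<le>n. kt \<tau> a (n-i) * kt \<tau> b i)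
    = \<tau> * (\<tau> powr (a-1) * \<tau> powr (b-1)) * (\<Sum>i\<le>n. pochhammer a (n-i) / fact (n-i) * (pochhammer b i / fact i))"
    using assms by (simp add: kt_eq sum_distrib_left mult_ac)
  also have "\<tau> * (\<tau> powr (a-1) * \<tau> powr (b-1)) = \<tau> powr (a + b - 1)"
  proof -
    have "\<tau> powr (a + b - 1) = \<tau> powr (1 + (a-1) + (b-1))" by (simp add: algebra_simps)
    also have "\<dots> = \<tau> powr 1 * \<tau> powr (a-1) * \<tau> powr (b-1)" by (simp only: powr_add)
    finally show ?thesis using assms by simp
  qed
  also have "(\<Sum>i\<le>n. pochhammer a (n-i) / fact (n-i) * (pochhammer b i / fact i)) = pochhammer (a+b) n / fact n"
    by (rule poch_conv)
  also have "\<tau> powr (a + b - 1) * (pochhammer (a+b) n / fact n) = kt \<tau> (a+b) n"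
    using assms by (simp add: kt_eq)
  finally show ?thesis .
qed

lemma pow_fact_le_exp:
  fixes x :: real assumes "x \<ge> 0"
  shows "x ^ n / fact n \<le> exp x"
proof -
  have "summable (\<lambda>k. x ^ k / fact k)" using summable_exp_generic[of x] by (simp add: divide_inverse ac_simps)
  moreover have "exp x = (\<Sum>k. x ^ k / fact k)" by (simp add: exp_def divide_inverse ac_simps)
  ultimately show ?thesis using sum_le_suminf[of "\<lambda>k. x ^ k / fact k" "{n}"] assms by auto
qed

lemma poch_le:
  fixes g :: real assumes "g \<ge> 0"
  shows "pochhammer g n \<le> (g + real n) ^ n"
proof -
  have "pochhammer g n = (\<Prod>i\<in>{0..<n}. g + real i)" by (simp add: pochhammer_prod)
  also have "\<dots> \<le> (\<Prod>i\<in>{0..<n}. g + real n)"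
    by (rule prod_mono) (use assms in auto)
  finally show ?thesis by simp
qed

lemma kt_summable:
  assumes "\<alpha> > 0" "\<beta> > 0" "\<tau> > 0" "\<tau> powr \<alpha> < 1"
  shows "summable (\<lambda>j. kt \<tau> (\<alpha> * real j + \<beta>) n)"
proof -
  define L where "L = ln \<tau>"
  have "exp (\<alpha> * L) < 1" using assms by (simp add: powr_def L_def)
  then have "\<alpha> * L < 0" by simp
  then have L: "L < 0" using assms(1) by (simp add: mult_less_0_iff)
  define \<epsilon> where "\<epsilon> = - L / 2"
  have \<epsilon>: "\<epsilon> > 0" using L by (simp add: \<epsilon>_def)
  define q where "q = exp (\<alpha> * L / 2)"
  have q: "norm q < 1" using L assms(1) by (simp add: q_def mult_pos_neg)
  define C where "C = exp ((\<beta> - 1) * L + \<epsilon> * (\<beta> + real n)) / \<epsilon> ^ n"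
  have bound: "norm (kt \<tau> (\<alpha> * real j + \<beta>) n) \<le> C * q ^ j" for j
  proof -
    define g where "g = \<alpha> * real j + \<beta>"
    have g: "g > 0" using assms by (simp add: g_def add_nonneg_pos)
    have kt: "kt \<tau> g n = exp ((g - 1) * L) * pochhammer g n / fact n"
      using kt_eq[OF g] assms by (simp add: powr_def L_def)
    have pp: "pochhammer g n \<ge> 0" using g by (simp add: pochhammer_nonneg)
    have "(\<epsilon> * (g + real n)) ^ n / fact n \<le> exp (\<epsilon> * (g + real n))"
      by (rule pow_fact_le_exp) (use \<epsilon> g in simp)
    then have "\<epsilon> ^ n * (g + real n) ^ n \<le> exp (\<epsilon> * (g + real n)) * fact n"
      by (simp only: power_mult_distrib pos_divide_le_eq[OF fact_gt_zero])
    then have "(g + real n) ^ n \<le> fact n * exp (\<epsilon> * (g + real n)) / \<epsilon> ^ n"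
      using \<epsilon> by (simp add: pos_le_divide_eq mult.commute)
    then have "pochhammer g n \<le> fact n * exp (\<epsilon> * (g + real n)) / \<epsilon> ^ n"
      using poch_le[of g n] g by linarith
    then have "pochhammer g n / fact n \<le> (fact n * exp (\<epsilon> * (g + real n)) / \<epsilon> ^ n) / fact n"
      by (rule divide_right_mono) simp
    then have P: "pochhammer g n / fact n \<le> exp (\<epsilon> * (g + real n)) / \<epsilon> ^ n"
      by simp
    have "norm (kt \<tau> g n) = exp ((g - 1) * L) * (pochhammer g n / fact n)"
      using pp by (simp add: kt)
    also have "\<dots> \<le> exp ((g - 1) * L) * (exp (\<epsilon> * (g + real n)) / \<epsilon> ^ n)"
      by (rule mult_left_mono[OF P]) simp
    also have "\<dots> = exp ((g - 1) * L + \<epsilon> * (g + real n)) / \<epsilon> ^ n"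
      by (simp add: exp_add)
    also have "(g - 1) * L + \<epsilon> * (g + real n) = ((\<beta> - 1) * L + \<epsilon> * (\<beta> + real n)) + real j * (\<alpha> * L / 2)"
      by (simp add: g_def \<epsilon>_def field_simps)
    also have "exp \<dots> = exp ((\<beta> - 1) * L + \<epsilon> * (\<beta> + real n)) * q ^ j"
      by (simp only: exp_add q_def exp_of_nat_mult[symmetric])
    finally show ?thesis by (simp add: g_def C_def)
  qed
  show ?thesis
    by (rule summable_comparison_test'[OF summable_mult[OF summable_geometric[OF q]]]) (use bound in auto)
qed

lemma norm_pow_le: "norm (blinfun_pow A j) \<le> 1" if "norm A \<le> 1" for A :: "'a::real_normed_vector \<Rightarrow>\<^sub>L 'a"
proof (induction j)
  case 0 then show ?case by (simp add: blinfun_pow_def norm_blinfun_id_le)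
next
  case (Suc j)
  have "norm (blinfun_pow A (Suc j)) = norm (A o\<^sub>L blinfun_pow A j)" by (simp add: blinfun_pow_def)
  also have "\<dots> \<le> norm A * norm (blinfun_pow A j)" by (rule norm_blinfun_compose)
  also have "\<dots> \<le> 1 * 1" by (rule mult_mono) (use that Suc in auto)
  finally show ?case by simp
qed

lemma pow_Suc: "blinfun_pow A (Suc j) = A o\<^sub>L blinfun_pow A j"
  by (simp add: blinfun_pow_def)

lemma pow_0: "blinfun_pow A 0 = id_blinfun"
  by (simp add: blinfun_pow_def)

lemma pow_comm: "A o\<^sub>L blinfun_pow A j = blinfun_pow A j o\<^sub>L A"
proof (induction j)
  case 0 then show ?case by (auto simp: pow_0 intro!: blinfun_eqI)
next
  case (Suc j)
  have "blinfun_pow A (Suc j) o\<^sub>L A = A o\<^sub>L (blinfun_pow A j o\<^sub>L A)"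
    by (auto simp: pow_Suc intro!: blinfun_eqI)
  also have "\<dots> = A o\<^sub>L blinfun_pow A (Suc j)"
    by (simp add: Suc[symmetric] pow_Suc)
  finally show ?case by simp
qed

theorem proposition3p12:
  fixes A :: "'a::banach \<Rightarrow>\<^sub>L 'a" and \<alpha> \<beta> \<tau> :: real
  assumes "\<alpha> > 0" and "\<beta> > 0" and "\<tau> > 0" and "\<tau> powr \<alpha> < 1"
    and "norm A < 1"
  shows "(\<forall>n. summable (\<lambda>j. kt \<tau> (\<alpha> * real j + \<beta>) n *\<^sub>R blinfun_pow A j))
    \<and> discrete_resolvent_family \<tau> \<alpha> \<beta> UNIV (blinfun_apply A)
        (\<lambda>n. \<Sum>j. kt \<tau> (\<alpha> * real j + \<beta>) n *\<^sub>R blinfun_pow A j)"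
proof -
  define c where "c j i = kt \<tau> (\<alpha> * real j + \<beta>) i" for j i
  define T where "T j = blinfun_pow A j" for j
  define S where "S i = (\<Sum>j. c j i *\<^sub>R T j)" for i
  have cpos: "c j i \<ge> 0" for j i
  proof -
    have g: "\<alpha> * real j + \<beta> > 0" using assms by (simp add: add_nonneg_pos)
    show ?thesis unfolding c_def kt_eq[OF g] using g assms by (simp add: pochhammer_nonneg)
  qed
  have sumg: "summable (\<lambda>j. kt \<tau> (\<alpha> * real j + \<beta>') n *\<^sub>R T j)" if b': "\<beta>' > 0" for n \<beta>'
  proof (rule summable_comparison_test'[OF kt_summable[OF assms(1) b' assms(3,4), of n]])
    fix j
    have g: "\<alpha> * real j + \<beta>' > 0" using assms b' by (simp add: add_nonneg_pos)
    have kp: "kt \<tau> (\<alpha> * real j + \<beta>') n \<ge> 0"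
      unfolding kt_eq[OF g] using g assms by (simp add: pochhammer_nonneg)
    have "norm (kt \<tau> (\<alpha> * real j + \<beta>') n *\<^sub>R T j) = kt \<tau> (\<alpha> * real j + \<beta>') n * norm (T j)" using kp by simp
    also have "\<dots> \<le> kt \<tau> (\<alpha> * real j + \<beta>') n * 1"
      by (rule mult_left_mono) (use norm_pow_le[of A j] assms(5) kp in \<open>auto simp: T_def\<close>)
    finally show "norm (kt \<tau> (\<alpha> * real j + \<beta>') n *\<^sub>R T j) \<le> kt \<tau> (\<alpha> * real j + \<beta>') n" by simp
  qed
  have summ: "summable (\<lambda>j. c j n *\<^sub>R T j)" for n
    unfolding c_def by (rule sumg[OF assms(2)])
  have blA: "bounded_linear (\<lambda>B. A o\<^sub>L B)"
    by (rule bounded_bilinear.bounded_linear_right[OF bounded_bilinear_blinfun_compose])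
  have blA': "bounded_linear (\<lambda>B. B o\<^sub>L A)"
    by (rule bounded_bilinear.bounded_linear_left[OF bounded_bilinear_blinfun_compose])
  have comm: "A o\<^sub>L S n = S n o\<^sub>L A" for n
  proof -
    have "A o\<^sub>L S n = (\<Sum>j. A o\<^sub>L (c j n *\<^sub>R T j))"
      unfolding S_def by (rule bounded_linear.suminf[OF blA summ])
    also have "\<dots> = (\<Sum>j. (c j n *\<^sub>R T j) o\<^sub>L A)"
      by (simp add: T_def pow_comm blinfun.scaleR_right bounded_bilinear.scaleR_right[OF bounded_bilinear_blinfun_compose]
          bounded_bilinear.scaleR_left[OF bounded_bilinear_blinfun_compose])
    also have "\<dots> = S n o\<^sub>L A"
      unfolding S_def by (rule bounded_linear.suminf[OF blA' summ, symmetric])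
    finally show ?thesis .
  qed
  have main: "S n = kt \<tau> \<beta> n *\<^sub>R id_blinfun + \<tau> *\<^sub>R (A o\<^sub>L (\<Sum>i\<le>n. kt \<tau> \<alpha> (n - i) *\<^sub>R S i))" for n
  proof -
    have "(\<Sum>i\<le>n. kt \<tau> \<alpha> (n - i) *\<^sub>R S i) = (\<Sum>i\<le>n. \<Sum>j. kt \<tau> \<alpha> (n - i) *\<^sub>R (c j i *\<^sub>R T j))"
      unfolding S_def by (intro sum.cong refl suminf_scaleR_right[OF summ])
    also have "\<dots> = (\<Sum>j. \<Sum>i\<le>n. kt \<tau> \<alpha> (n - i) *\<^sub>R (c j i *\<^sub>R T j))"
      by (rule suminf_sum[symmetric]) (intro summable_scaleR_right summ)
    also have "\<dots> = (\<Sum>j. (c (Suc j) n / \<tau>) *\<^sub>R T j)"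
    proof (intro suminf_cong)
      fix j
      have g: "\<alpha> * real j + \<beta> > 0" using assms by (simp add: add_nonneg_pos)
      have "\<tau> * (\<Sum>i\<le>n. kt \<tau> \<alpha> (n-i) * c j i) = c (Suc j) n"
        unfolding c_def using kt_conv[OF assms(3) assms(1) g, of n] by (simp add: algebra_simps)
      then have "(\<Sum>i\<le>n. kt \<tau> \<alpha> (n-i) * c j i) = c (Suc j) n / \<tau>"
        using assms(3) by (simp add: field_simps)
      then show "(\<Sum>i\<le>n. kt \<tau> \<alpha> (n - i) *\<^sub>R (c j i *\<^sub>R T j)) = (c (Suc j) n / \<tau>) *\<^sub>R T j"
        by (simp add: scaleR_sum_left[symmetric])
    qed
    finally have E1: "(\<Sum>i\<le>n. kt \<tau> \<alpha> (n - i) *\<^sub>R S i) = (\<Sum>j. (c (Suc j) n / \<tau>) *\<^sub>R T j)" .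
    have s2: "summable (\<lambda>j. (c (Suc j) n / \<tau>) *\<^sub>R T j)"
    proof -
      have "summable (\<lambda>j. kt \<tau> (\<alpha> * real j + (\<alpha> + \<beta>)) n *\<^sub>R T j)"
        by (rule sumg) (use assms in simp)
      then have "summable (\<lambda>j. (1 / \<tau>) *\<^sub>R (kt \<tau> (\<alpha> * real j + (\<alpha> + \<beta>)) n *\<^sub>R T j))"
        by (rule summable_scaleR_right)
      moreover have "\<alpha> * real (Suc j) + \<beta> = \<alpha> * real j + (\<alpha> + \<beta>)" for j by (simp add: algebra_simps)
      ultimately show ?thesis by (simp add: c_def add.assoc)
    qed
    have "\<tau> *\<^sub>R (A o\<^sub>L (\<Sum>j. (c (Suc j) n / \<tau>) *\<^sub>R T j)) = \<tau> *\<^sub>R (\<Sum>j. A o\<^sub>L ((c (Suc j) n / \<tau>) *\<^sub>R T j))"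
      by (simp add: bounded_linear.suminf[OF blA s2])
    also have "\<dots> = (\<Sum>j. \<tau> *\<^sub>R (A o\<^sub>L ((c (Suc j) n / \<tau>) *\<^sub>R T j)))"
      by (rule suminf_scaleR_right[OF bounded_linear.summable[OF blA s2]])
    also have "\<dots> = (\<Sum>j. c (Suc j) n *\<^sub>R T (Suc j))"
      using assms(3) by (simp add: T_def pow_Suc bounded_bilinear.scaleR_right[OF bounded_bilinear_blinfun_compose])
    also have "\<dots> = S n - c 0 n *\<^sub>R T 0"
      unfolding S_def by (rule suminf_split_head[OF summ])
    finally show ?thesis using E1 by (simp add: c_def T_def pow_0)
  qed
  have Sdef: "(\<lambda>n. \<Sum>j. kt \<tau> (\<alpha> * real j + \<beta>) n *\<^sub>R blinfun_pow A j) = S"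
    by (simp add: S_def c_def T_def fun_eq_iff)
  have cl: "closed {(x, blinfun_apply A x) | x. x \<in> (UNIV::'a set)}"
  proof -
    have "{(x, blinfun_apply A x) | x. x \<in> (UNIV::'a set)} = {p. snd p = blinfun_apply A (fst p)}"
      by auto
    moreover have "closed {p :: 'a \<times> 'a. snd p = blinfun_apply A (fst p)}"
      by (intro closed_Collect_eq continuous_intros)
    ultimately show ?thesis by simp
  qed
  have res: "S n x = kt \<tau> \<beta> n *\<^sub>R x + \<tau> *\<^sub>R blinfun_apply A (\<Sum>j\<le>n. kt \<tau> \<alpha> (n - j) *\<^sub>R blinfun_apply (S j) x)" for n x
  proof -
    have "S n x = (kt \<tau> \<beta> n *\<^sub>R id_blinfun + \<tau> *\<^sub>R (A o\<^sub>L (\<Sum>i\<le>n. kt \<tau> \<alpha> (n - i) *\<^sub>R S i))) x"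
      using main[of n] by simp
    then show ?thesis by (simp add: blinfun.scaleR_left blinfun.add_left blinfun.sum_left)
  qed
  have cm: "blinfun_apply A (S n x) = S n (blinfun_apply A x)" for n x
    using arg_cong[OF comm[of n], of "\<lambda>B. blinfun_apply B x"] by simp
  show ?thesis unfolding Sdef
  proof (intro conjI)
    show "\<forall>n. summable (\<lambda>j. kt \<tau> (\<alpha> * real j + \<beta>) n *\<^sub>R blinfun_pow A j)"
      using summ by (simp add: c_def T_def)
    show "discrete_resolvent_family \<tau> \<alpha> \<beta> UNIV (blinfun_apply A) S"
      unfolding discrete_resolvent_family_def closed_operator_def
    proof (intro conjI)
      show "subspace (UNIV::'a set)" by (rule subspace_UNIV)
      show "\<forall>x\<in>UNIV. \<forall>y\<in>UNIV. blinfun_apply A (x + y) = blinfun_apply A x + blinfun_apply A y"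
        by (simp add: blinfun.add_right)
      show "\<forall>x\<in>UNIV. \<forall>c::real. blinfun_apply A (c *\<^sub>R x) = c *\<^sub>R blinfun_apply A x"
        by (simp add: blinfun.scaleR_right)
      show "closed {(x, blinfun_apply A x) | x. x \<in> UNIV}" by (rule cl)
      show "\<forall>n x. blinfun_apply (S n) x \<in> UNIV" by simp
      show "\<forall>n. \<forall>x\<in>UNIV. blinfun_apply A (blinfun_apply (S n) x) = blinfun_apply (S n) (blinfun_apply A x)"
        using cm by blast
      show "\<forall>n x. (\<Sum>j\<le>n. kt \<tau> \<alpha> (n - j) *\<^sub>R blinfun_apply (S j) x) \<in> UNIV \<and>
          blinfun_apply (S n) x = kt \<tau> \<beta> n *\<^sub>R x + \<tau> *\<^sub>R blinfun_apply A (\<Sum>j\<le>n. kt \<tau> \<alpha> (n - j) *\<^sub>R blinfun_apply (S j) x)"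
        using res by blast
    qed
  qed
qed

end
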